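(* Let $F_1,F_2,F_3$ be smooth real functions of one variable and set $w_1=y+\sqrt3x$, $w_2=y-\sqrt3x$, $w_3=-2y$. Suppose that, identically in $(x,y)$, $$F_1'(w_1)\big(F_2(w_2)-F_3(w_3)\big)+F_2'(w_2)\big(F_3(w_3)-F_1(w_1)\big)+F_3'(w_3)\big(F_1(w_1)-F_2(w_2)\big)=0.$$ Then for the potential $V(x,y)=F_1(y+\sqrt3x)+F_2(y-\sqrt3x)+F_3(-2y)$ the function $$J=\dot x^3-3\dot x\dot y^2+3\big[F_1(y+\sqrt3x)+F_2(y-\sqrt3x)-2F_3(-2y)\big]\dot x-3\sqrt3\big[F_1(y+\sqrt3x)-F_2(y-\sqrt3x)\big]\dot y$$ is a first integral of the system $\ddot x=-V_{,x}$, $\ddot y=-V_{,y}$.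
   Context: A first integral is a function of $(t,x,y,\dot x,\dot y)$ whose total time derivative vanishes along every solution of the given equations of motion (on the domain where everything is smooth). *)

theory Defs
  imports "HOL-Analysis.Analysis"
begin

definition smooth_fun :: "(real \<Rightarrow> real) \<Rightarrow> bool" where
  "smooth_fun f \<longleftrightarrow> (\<forall>n x. ((deriv ^^ n) f) differentiable (at x))"

definition is_solution ::
  "(real \<Rightarrow> real \<Rightarrow> real) \<Rightarrow> (real \<Rightarrow> real \<Rightarrow> real) \<Rightarrow> real set \<Rightarrow>
   (real \<Rightarrow> real) \<Rightarrow> (real \<Rightarrow> real) \<Rightarrow> bool" where
  "is_solution ax ay I x y \<longleftrightarrow> open I \<and>
     (\<forall>t\<in>I. x differentiable (at t) \<and> y differentiable (at t) \<and>
            deriv x differentiable (at t) \<and> deriv y differentiable (at t) \<and>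
            deriv (deriv x) t = ax (x t) (y t) \<and>
            deriv (deriv y) t = ay (x t) (y t))"

definition first_integral ::
  "(real \<Rightarrow> real \<Rightarrow> real) \<Rightarrow> (real \<Rightarrow> real \<Rightarrow> real) \<Rightarrow>
   (real \<Rightarrow> real \<Rightarrow> real \<Rightarrow> real \<Rightarrow> real \<Rightarrow> real) \<Rightarrow> bool" where
  "first_integral ax ay J \<longleftrightarrow>
     (\<forall>I x y. is_solution ax ay I x y \<longrightarrow>
        (\<forall>t\<in>I. ((\<lambda>s. J s (x s) (y s) (deriv x s) (deriv y s)) has_real_derivative 0) (at t)))"

end

theory Submission
  imports Defs
begin

lemma smooth_D:
  assumes "smooth_fun F"
  shows "(F has_real_derivative deriv F z) (at z)"
proof -
  have "F differentiable (at z)" using assms unfolding smooth_fun_def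
    by (metis funpow_0)
  thus ?thesis by (simp add: DERIV_deriv_iff_real_differentiable)
qed

lemma comp_D:
  assumes "smooth_fun F" and "(g has_real_derivative g') (at t)"
  shows "((\<lambda>s. F (g s)) has_real_derivative deriv F (g t) * g') (at t)"
  using DERIV_chain2[OF smooth_D[OF assms(1)] assms(2)] by simp

lemma cmul_D: "((*) c has_real_derivative c * 1) (at a)"
  using DERIV_cmult[OF DERIV_ident, of c a] by simp

lemma poly_D:
  fixes u v P Q R :: "real \<Rightarrow> real"
  assumes "(u has_real_derivative u') (at t)" "(v has_real_derivative v') (at t)"
    "(P has_real_derivative P') (at t)" "(Q has_real_derivative Q') (at t)"
    "(R has_real_derivative R') (at t)"
  shows "((\<lambda>s. u s ^ 3 - 3 * u s * v s ^ 2 + 3 * (P s + Q s - 2 * R s) * u s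
            - 3 * sqrt 3 * (P s - Q s) * v s) has_real_derivative
    (3 * u t ^ 2 * u' - 3 * (u' * v t ^ 2 + u t * (2 * v t * v'))
     + 3 * ((P' + Q' - 2 * R') * u t + (P t + Q t - 2 * R t) * u')
     - 3 * sqrt 3 * ((P' - Q') * v t + (P t - Q t) * v'))) (at t)"
  by (rule derivative_eq_intros assms refl | simp add: algebra_simps power2_eq_square)+

theorem mainTheorem2:
  fixes F1 F2 F3 :: "real \<Rightarrow> real"
  assumes "smooth_fun F1" and "smooth_fun F2" and "smooth_fun F3"
    and "\<forall>x y. deriv F1 (y + sqrt 3 * x) * (F2 (y - sqrt 3 * x) - F3 (-2 * y))
              + deriv F2 (y - sqrt 3 * x) * (F3 (-2 * y) - F1 (y + sqrt 3 * x))
              + deriv F3 (-2 * y) * (F1 (y + sqrt 3 * x) - F2 (y - sqrt 3 * x)) = 0"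
  defines "V \<equiv> (\<lambda>x y. F1 (y + sqrt 3 * x) + F2 (y - sqrt 3 * x) + F3 (-2 * y))"
  shows "first_integral
           (\<lambda>x y. - deriv (\<lambda>u. V u y) x)
           (\<lambda>x y. - deriv (\<lambda>v. V x v) y)
           (\<lambda>t x y xd yd. xd ^ 3 - 3 * xd * yd ^ 2
              + 3 * (F1 (y + sqrt 3 * x) + F2 (y - sqrt 3 * x) - 2 * F3 (-2 * y)) * xd
              - 3 * sqrt 3 * (F1 (y + sqrt 3 * x) - F2 (y - sqrt 3 * x)) * yd)"
proof -
  have Vx: "deriv (\<lambda>u. V u b) a = sqrt 3 * deriv F1 (b + sqrt 3 * a) - sqrt 3 * deriv F2 (b - sqrt 3 * a)" for a b
  proof (rule DERIV_imp_deriv)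
    have "((\<lambda>u. F1 (b + sqrt 3 * u) + F2 (b - sqrt 3 * u) + F3 (-2 * b)) has_real_derivative
      deriv F1 (b + sqrt 3 * a) * (0 + sqrt 3 * 1) + deriv F2 (b - sqrt 3 * a) * (0 - sqrt 3 * 1) + 0) (at a)"
      by (intro derivative_intros comp_D assms cmul_D)
    thus "((\<lambda>u. V u b) has_real_derivative sqrt 3 * deriv F1 (b + sqrt 3 * a) - sqrt 3 * deriv F2 (b - sqrt 3 * a)) (at a)"
      unfolding V_def by (simp add: algebra_simps)
  qed
  have Vy: "deriv (\<lambda>v. V a v) b = deriv F1 (b + sqrt 3 * a) + deriv F2 (b - sqrt 3 * a) - 2 * deriv F3 (-2 * b)" for a b
  proof (rule DERIV_imp_deriv)
    have "((\<lambda>v. F1 (v + sqrt 3 * a) + F2 (v - sqrt 3 * a) + F3 (-2 * v)) has_real_derivative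
      deriv F1 (b + sqrt 3 * a) * (1 + 0) + deriv F2 (b - sqrt 3 * a) * (1 - 0) + deriv F3 (-2 * b) * (-2 * 1)) (at b)"
      by (intro derivative_intros comp_D assms cmul_D)
    thus "((\<lambda>v. V a v) has_real_derivative deriv F1 (b + sqrt 3 * a) + deriv F2 (b - sqrt 3 * a) - 2 * deriv F3 (-2 * b)) (at b)"
      unfolding V_def by (simp add: algebra_simps)
  qed
  show ?thesis unfolding first_integral_def
  proof (intro allI impI ballI)
    fix I x y t
    assume sol: "is_solution (\<lambda>x y. - deriv (\<lambda>u. V u y) x) (\<lambda>x y. - deriv (\<lambda>v. V x v) y) I x y"
      and tI: "t \<in> I"
    let ?a = "deriv F1 (y t + sqrt 3 * x t)"
    let ?b = "deriv F2 (y t - sqrt 3 * x t)"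
    let ?c = "deriv F3 (-2 * y t)"
    let ?p = "F1 (y t + sqrt 3 * x t)"
    let ?q = "F2 (y t - sqrt 3 * x t)"
    let ?r = "F3 (-2 * y t)"
    let ?xd = "deriv x t"
    let ?yd = "deriv y t"
    have s: "x differentiable (at t)" "y differentiable (at t)"
      "deriv x differentiable (at t)" "deriv y differentiable (at t)"
      "deriv (deriv x) t = - (sqrt 3 * ?a - sqrt 3 * ?b)"
      "deriv (deriv y) t = - (?a + ?b - 2 * ?c)"
      using sol tI unfolding is_solution_def by (auto simp: Vx Vy)
    have dx: "(x has_real_derivative ?xd) (at t)" and dy: "(y has_real_derivative ?yd) (at t)"
      using s by (simp_all add: DERIV_deriv_iff_real_differentiable)
    have dxd: "(deriv x has_real_derivative - (sqrt 3 * ?a - sqrt 3 * ?b)) (at t)"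
      and dyd: "(deriv y has_real_derivative - (?a + ?b - 2 * ?c)) (at t)"
      using s by (metis DERIV_deriv_iff_real_differentiable)+
    have g1: "((\<lambda>s. y s + sqrt 3 * x s) has_real_derivative ?yd + sqrt 3 * ?xd) (at t)"
      by (intro derivative_intros DERIV_cmult dx dy)
    have g2: "((\<lambda>s. y s - sqrt 3 * x s) has_real_derivative ?yd - sqrt 3 * ?xd) (at t)"
      by (intro derivative_intros DERIV_cmult dx dy)
    have g3: "((\<lambda>s. -2 * y s) has_real_derivative -2 * ?yd) (at t)"
      by (intro derivative_intros DERIV_cmult dx dy)
    note h1 = comp_D[OF assms(1) g1] and h2 = comp_D[OF assms(2) g2] and h3 = comp_D[OF assms(3) g3]
    have D: "((\<lambda>s. deriv x s ^ 3 - 3 * deriv x s * deriv y s ^ 2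
              + 3 * (F1 (y s + sqrt 3 * x s) + F2 (y s - sqrt 3 * x s) - 2 * F3 (-2 * y s)) * deriv x s
              - 3 * sqrt 3 * (F1 (y s + sqrt 3 * x s) - F2 (y s - sqrt 3 * x s)) * deriv y s)
        has_real_derivative
          (3 * ?xd^2 * (- (sqrt 3 * ?a - sqrt 3 * ?b))
           - 3 * ((- (sqrt 3 * ?a - sqrt 3 * ?b)) * ?yd^2 + ?xd * (2 * ?yd * (- (?a + ?b - 2 * ?c))))
           + 3 * ((?a * (?yd + sqrt 3 * ?xd) + ?b * (?yd - sqrt 3 * ?xd) - 2 * (?c * (-2 * ?yd))) * ?xd
                  + (?p + ?q - 2 * ?r) * (- (sqrt 3 * ?a - sqrt 3 * ?b)))
           - 3 * sqrt 3 * ((?a * (?yd + sqrt 3 * ?xd) - ?b * (?yd - sqrt 3 * ?xd)) * ?yd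
                  + (?p - ?q) * (- (?a + ?b - 2 * ?c))))) (at t)"
      using poly_D[OF dxd dyd h1 h2 h3] by simp
    have key: "?a * (?q - ?r) + ?b * (?r - ?p) + ?c * (?p - ?q) = 0"
      using assms(4) by blast
    have s3: "sqrt 3 * sqrt 3 = (3::real)" "\<And>z. sqrt 3 * (sqrt 3 * z) = (3::real) * z"
      by (simp_all add: mult.assoc[symmetric])
    have "(3 * ?xd^2 * (- (sqrt 3 * ?a - sqrt 3 * ?b))
           - 3 * ((- (sqrt 3 * ?a - sqrt 3 * ?b)) * ?yd^2 + ?xd * (2 * ?yd * (- (?a + ?b - 2 * ?c))))
           + 3 * ((?a * (?yd + sqrt 3 * ?xd) + ?b * (?yd - sqrt 3 * ?xd) - 2 * (?c * (-2 * ?yd))) * ?xd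
                  + (?p + ?q - 2 * ?r) * (- (sqrt 3 * ?a - sqrt 3 * ?b)))
           - 3 * sqrt 3 * ((?a * (?yd + sqrt 3 * ?xd) - ?b * (?yd - sqrt 3 * ?xd)) * ?yd
                  + (?p - ?q) * (- (?a + ?b - 2 * ?c)))) 
          = -6 * sqrt 3 * (?a * (?q - ?r) + ?b * (?r - ?p) + ?c * (?p - ?q))"
      by (simp add: algebra_simps power2_eq_square s3)
    with D key show "((\<lambda>s. deriv x s ^ 3 - 3 * deriv x s * deriv y s ^ 2
              + 3 * (F1 (y s + sqrt 3 * x s) + F2 (y s - sqrt 3 * x s) - 2 * F3 (-2 * y s)) * deriv x s
              - 3 * sqrt 3 * (F1 (y s + sqrt 3 * x s) - F2 (y s - sqrt 3 * x s)) * deriv y s)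
        has_real_derivative 0) (at t)" by simp
  qed
qed

end
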